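(* Let $1<p<\infty$ and let $\Omega\subset\mathbb{R}^N$ be an open set which is $q_0$-admissible for some $1\le q_0<p$. Then \[ \lim_{q\nearrow p}\lambda_{p,q}(\Omega)=\lambda_p(\Omega),\qquad\text{where }\lambda_p(\Omega)=\inf_{\psi\in C^\infty_0(\Omega)}\Big\{\int_\Omega|\nabla\psi|^p\,dx:\int_\Omega|\psi|^p\,dx=1\Big\}. \]
   Context: For $1\le q<p$, $\lambda_{p,q}(\Omega)=\inf_{\psi\in C^\infty_0(\Omega)}\{\int_\Omega|\nabla\psi|^p\,dx:\int_\Omega|\psi|^q\,dx=1\}$, and $\Omega$ is called $q$-admissible if $\lambda_{p,q}(\Omega)>0$. *)

theory Defs
  imports "HOL-Analysis.Analysis"
begin

definition partial_deriv :: "('a::euclidean_space \<Rightarrow> real) \<Rightarrow> 'a \<Rightarrow> 'a \<Rightarrow> real" where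
  "partial_deriv f b = (\<lambda>x. frechet_derivative f (at x) b)"

fun iter_partial :: "'a::euclidean_space list \<Rightarrow> ('a \<Rightarrow> real) \<Rightarrow> 'a \<Rightarrow> real" where
  "iter_partial [] f = f"
| "iter_partial (b # bs) f = partial_deriv (iter_partial bs f) b"

definition smooth_fun :: "('a::euclidean_space \<Rightarrow> real) \<Rightarrow> bool" where
  "smooth_fun f \<longleftrightarrow> (\<forall>bs. set bs \<subseteq> Basis \<longrightarrow> (\<forall>x. iter_partial bs f differentiable (at x)))"

definition test_fun :: "'a::euclidean_space set \<Rightarrow> ('a \<Rightarrow> real) \<Rightarrow> bool" where
  "test_fun \<Omega> \<psi> \<longleftrightarrow> smooth_fun \<psi> \<and> compact (closure {x. \<psi> x \<noteq> 0})
      \<and> closure {x. \<psi> x \<noteq> 0} \<subseteq> \<Omega>"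

definition grad :: "('a::euclidean_space \<Rightarrow> real) \<Rightarrow> 'a \<Rightarrow> 'a" where
  "grad f x = (\<Sum>b\<in>Basis. partial_deriv f b x *\<^sub>R b)"

text \<open>lambda_{p,q}(Omega) as an extended real (infimum of the empty set is +infinity).\<close>
definition lambda_pq :: "real \<Rightarrow> real \<Rightarrow> 'a::euclidean_space set \<Rightarrow> ereal" where
  "lambda_pq p q \<Omega> = (INF \<psi>\<in>{\<psi>. test_fun \<Omega> \<psi> \<and> (LINT x:\<Omega>|lborel. \<bar>\<psi> x\<bar> powr q) = 1}.
       ereal (LINT x:\<Omega>|lborel. norm (grad \<psi> x) powr p))"

definition q_admissible :: "real \<Rightarrow> real \<Rightarrow> 'a::euclidean_space set \<Rightarrow> bool" where
  "q_admissible p q \<Omega> \<longleftrightarrow> lambda_pq p q \<Omega> > 0"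

end

theory Submission
  imports Defs
begin


lemma test_zero_outside:
  assumes "test_fun \<Omega> \<psi>" "x \<notin> closure {x. \<psi> x \<noteq> 0}"
  shows "\<psi> x = 0"
  by (metis (mono_tags) assms(2) closure_subset mem_Collect_eq subsetD)

lemma test_diff:
  assumes "test_fun \<Omega> \<psi>" shows "\<psi> differentiable (at x)"
  using assms unfolding test_fun_def smooth_fun_def
  by (metis empty_subsetI iter_partial.simps(1) list.set(1))

lemma test_cont:
  assumes "test_fun \<Omega> \<psi>" shows "continuous_on S \<psi>"
  using test_diff[OF assms] differentiable_imp_continuous_within continuous_at_imp_continuous_on
  by blast

lemma test_int:
  fixes \<psi> :: "'a::euclidean_space \<Rightarrow> real"
  assumes "test_fun \<Omega> \<psi>" "r > 0"
  shows "integrable lborel (\<lambda>x. \<bar>\<psi> x\<bar> powr r)"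
proof -
  let ?K = "closure {x. \<psi> x \<noteq> 0}"
  have "compact ?K" using assms unfolding test_fun_def by blast
  moreover have "continuous_on ?K (\<lambda>x. \<bar>\<psi> x\<bar> powr r)"
  proof (rule continuous_on_powr')
    show "continuous_on ?K (\<lambda>x. \<bar>\<psi> x\<bar>)" using test_cont[OF assms(1)] by (rule continuous_on_rabs)
  qed (use assms in auto)
  ultimately have "integrable lborel (\<lambda>x. indicator ?K x *\<^sub>R (\<bar>\<psi> x\<bar> powr r))"
    by (rule borel_integrable_compact)
  moreover have "(\<lambda>x. indicator ?K x *\<^sub>R (\<bar>\<psi> x\<bar> powr r)) = (\<lambda>x. \<bar>\<psi> x\<bar> powr r)"
  proof
    fix x show "indicator ?K x *\<^sub>R (\<bar>\<psi> x\<bar> powr r) = \<bar>\<psi> x\<bar> powr r"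
      using test_zero_outside[OF assms(1), of x] by (cases "x \<in> ?K") auto
  qed
  ultimately show ?thesis by simp
qed

lemma test_setint:
  fixes \<psi> :: "'a::euclidean_space \<Rightarrow> real"
  assumes "test_fun \<Omega> \<psi>" "r > 0"
  shows "(LINT x:\<Omega>|lborel. \<bar>\<psi> x\<bar> powr r) = (\<integral>x. \<bar>\<psi> x\<bar> powr r \<partial>lborel)"
  unfolding set_lebesgue_integral_def
proof (rule Bochner_Integration.integral_cong[OF refl])
  fix x
  have "x \<notin> \<Omega> \<Longrightarrow> \<psi> x = 0"
    by (metis (mono_tags) assms(1) test_fun_def test_zero_outside subsetD)
  then show "indicator \<Omega> x *\<^sub>R (\<bar>\<psi> x\<bar> powr r) = \<bar>\<psi> x\<bar> powr r"
    by (cases "x \<in> \<Omega>") auto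
qed

lemma scale_iter:
  fixes f :: "'a::euclidean_space \<Rightarrow> real"
  assumes "smooth_fun f" "set bs \<subseteq> Basis"
  shows "iter_partial bs (\<lambda>x. c * f x) = (\<lambda>x. c * iter_partial bs f x)"
  using assms(2)
proof (induction bs)
  case Nil
  then show ?case by simp
next
  case (Cons b bs)
  then have IH: "iter_partial bs (\<lambda>x. c * f x) = (\<lambda>x. c * iter_partial bs f x)" by simp
  show ?case
  proof
    fix x
    let ?g = "iter_partial bs f"
    have "?g differentiable (at x)" using assms(1) Cons.prems unfolding smooth_fun_def by simp
    then have d: "(?g has_derivative frechet_derivative ?g (at x)) (at x)"
      by (rule frechet_derivative_works[THEN iffD1])
    have "((\<lambda>x. c * ?g x) has_derivative (\<lambda>h. c * frechet_derivative ?g (at x) h)) (at x)"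
      by (rule has_derivative_mult_right[OF d])
    then have "frechet_derivative (\<lambda>x. c * ?g x) (at x) = (\<lambda>h. c * frechet_derivative ?g (at x) h)"
      by (metis frechet_derivative_at)
    then show "iter_partial (b # bs) (\<lambda>x. c * f x) x = c * iter_partial (b # bs) f x"
      by (simp add: IH partial_deriv_def)
  qed
qed

lemma test_scale:
  fixes \<psi> :: "'a::euclidean_space \<Rightarrow> real"
  assumes "test_fun \<Omega> \<psi>" "c \<noteq> 0"
  shows "test_fun \<Omega> (\<lambda>x. c * \<psi> x)"
proof -
  have s: "smooth_fun \<psi>" using assms unfolding test_fun_def by blast
  have "smooth_fun (\<lambda>x. c * \<psi> x)"
    unfolding smooth_fun_def
  proof (intro allI impI)
    fix bs x assume "set bs \<subseteq> (Basis::'a set)"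
    moreover have "iter_partial bs \<psi> differentiable (at x)"
      using s calculation unfolding smooth_fun_def by blast
    then obtain D where "(iter_partial bs \<psi> has_derivative D) (at x)" unfolding differentiable_def by blast
    then have "((\<lambda>x. c * iter_partial bs \<psi> x) has_derivative (\<lambda>h. c * D h)) (at x)"
      by (rule has_derivative_mult_right)
    then show "iter_partial bs (\<lambda>x. c * \<psi> x) differentiable (at x)"
      using scale_iter[OF s \<open>set bs \<subseteq> Basis\<close>, of c] unfolding differentiable_def by auto
  qed
  moreover have "{x. c * \<psi> x \<noteq> 0} = {x. \<psi> x \<noteq> 0}" using assms(2) by auto
  ultimately show ?thesis using assms unfolding test_fun_def by simp
qed

lemma grad_scale:
  fixes \<psi> :: "'a::euclidean_space \<Rightarrow> real"
  assumes "smooth_fun \<psi>"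
  shows "grad (\<lambda>x. c * \<psi> x) x = c *\<^sub>R grad \<psi> x"
proof -
  have "\<And>b. b \<in> Basis \<Longrightarrow> partial_deriv (\<lambda>x. c * \<psi> x) b = (\<lambda>x. c * partial_deriv \<psi> b x)"
    using scale_iter[OF assms, of "[b]" c for b] by simp
  then show ?thesis unfolding grad_def by (simp add: scaleR_sum_right)
qed



definition Nr :: "real \<Rightarrow> ('a::euclidean_space \<Rightarrow> real) \<Rightarrow> real" where
  "Nr r \<psi> = (\<integral>x. \<bar>\<psi> x\<bar> powr r \<partial>lborel)"

definition Gp :: "real \<Rightarrow> 'a::euclidean_space set \<Rightarrow> ('a \<Rightarrow> real) \<Rightarrow> real" where
  "Gp p \<Omega> \<psi> = (LINT x:\<Omega>|lborel. norm (grad \<psi> x) powr p)"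

lemma N_scale:
  assumes "c > 0" shows "Nr r (\<lambda>x. c * \<psi> x) = c powr r * Nr r \<psi>"
proof -
  have "\<And>x. \<bar>c * \<psi> x\<bar> powr r = c powr r * \<bar>\<psi> x\<bar> powr r"
    using assms by (simp add: abs_mult powr_mult)
  then show ?thesis unfolding Nr_def by simp
qed

lemma G_scale:
  assumes "test_fun \<Omega> \<psi>" "c > 0"
  shows "Gp p \<Omega> (\<lambda>x. c * \<psi> x) = c powr p * Gp p \<Omega> \<psi>"
proof -
  have s: "smooth_fun \<psi>" using assms unfolding test_fun_def by blast
  have e: "(\<lambda>x. indicator \<Omega> x *\<^sub>R (norm (grad (\<lambda>x. c * \<psi> x) x) powr p))
      = (\<lambda>x. c powr p * (indicator \<Omega> x *\<^sub>R (norm (grad \<psi> x) powr p)))"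
    using assms(2) by (simp add: grad_scale[OF s] powr_mult mult.left_commute)
  show ?thesis unfolding Gp_def set_lebesgue_integral_def by (simp only: e integral_mult_right_zero)
qed

lemma N_nonneg: "Nr r \<psi> \<ge> 0"
  unfolding Nr_def by (rule integral_nonneg_AE) auto

lemma G_nonneg: "Gp p \<Omega> \<psi> \<ge> 0"
  unfolding Gp_def set_lebesgue_integral_def by (rule integral_nonneg_AE) (auto simp: indicator_def)

lemma N_pos_iff:
  assumes "test_fun \<Omega> \<psi>" "r > 0"
  shows "Nr r \<psi> > 0 \<longleftrightarrow> \<not> (AE x in lborel. \<psi> x = 0)"
proof -
  have "Nr r \<psi> = 0 \<longleftrightarrow> (AE x in lborel. \<bar>\<psi> x\<bar> powr r = 0)"
    unfolding Nr_def by (rule integral_nonneg_eq_0_iff_AE[OF test_int[OF assms]]) auto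
  also have "\<dots> \<longleftrightarrow> (AE x in lborel. \<psi> x = 0)" by simp
  finally show ?thesis using N_nonneg[of r \<psi>] by linarith
qed

lemma lam_eq:
  fixes \<Omega> :: "'a::euclidean_space set"
  assumes "r > 0"
  shows "lambda_pq p r \<Omega> = (INF \<psi>\<in>{\<psi>. test_fun \<Omega> \<psi> \<and> \<not>(AE x in lborel. \<psi> x = 0)}.
            ereal (Gp p \<Omega> \<psi> / Nr r \<psi> powr (p/r)))"
  unfolding lambda_pq_def
proof (rule antisym)
  show "(INF \<psi>\<in>{\<psi>. test_fun \<Omega> \<psi> \<and> (LINT x:\<Omega>|lborel. \<bar>\<psi> x\<bar> powr r) = 1}.
       ereal (LINT x:\<Omega>|lborel. norm (grad \<psi> x) powr p))
     \<le> (INF \<psi>\<in>{\<psi>. test_fun \<Omega> \<psi> \<and> \<not>(AE x in lborel. \<psi> x = 0)}.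
            ereal (Gp p \<Omega> \<psi> / Nr r \<psi> powr (p/r)))"
  proof (rule INF_greatest)
    fix \<psi> assume "\<psi> \<in> {\<psi>. test_fun \<Omega> \<psi> \<and> \<not>(AE x in lborel. \<psi> x = 0)}"
    then have t: "test_fun \<Omega> \<psi>" and ne: "\<not>(AE x in lborel. \<psi> x = 0)" by auto
    define N where "N = Nr r \<psi>"
    have Npos: "N > 0" using N_pos_iff[OF t assms] ne N_def by simp
    define c where "c = N powr (-1/r)"
    have cpos: "c > 0" using Npos c_def by simp
    have t2: "test_fun \<Omega> (\<lambda>x. c * \<psi> x)" using test_scale[OF t] cpos by simp
    have Nne: "N \<noteq> 0" using Npos by simp
    have "Nr r (\<lambda>x. c * \<psi> x) = c powr r * N" using N_scale[OF cpos] N_def by simp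
    also have "c powr r * N = N powr (-1) * N powr 1" using assms Npos by (simp add: c_def powr_powr)
    also have "\<dots> = 1" using Nne by (simp add: powr_add[symmetric])
    finally have "Nr r (\<lambda>x. c * \<psi> x) = 1" .
    then have n1: "(LINT x:\<Omega>|lborel. \<bar>c * \<psi> x\<bar> powr r) = 1"
      using test_setint[OF t2 assms] Nr_def by metis
    have "Gp p \<Omega> (\<lambda>x. c * \<psi> x) = c powr p * Gp p \<Omega> \<psi>" by (rule G_scale[OF t cpos])
    also have "\<dots> = Gp p \<Omega> \<psi> / N powr (p/r)"
    proof -
      have "c powr p = N powr (-1/r * p)" by (simp add: c_def powr_powr)
      also have "-1/r*p = -(p/r)" by simp
      also have "N powr (-(p/r)) = 1 / N powr (p/r)" by (rule powr_minus_divide)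
      finally show ?thesis by simp
    qed
    finally have g: "(LINT x:\<Omega>|lborel. norm (grad (\<lambda>x. c * \<psi> x) x) powr p) = Gp p \<Omega> \<psi> / N powr (p/r)"
      unfolding Gp_def .
    have "(\<lambda>x. c * \<psi> x) \<in> {\<psi>. test_fun \<Omega> \<psi> \<and> (LINT x:\<Omega>|lborel. \<bar>\<psi> x\<bar> powr r) = 1}"
      using t2 n1 by simp
    then have "(INF \<psi>\<in>{\<psi>. test_fun \<Omega> \<psi> \<and> (LINT x:\<Omega>|lborel. \<bar>\<psi> x\<bar> powr r) = 1}.
       ereal (LINT x:\<Omega>|lborel. norm (grad \<psi> x) powr p)) \<le> ereal (LINT x:\<Omega>|lborel. norm (grad (\<lambda>x. c * \<psi> x) x) powr p)"
      by (rule INF_lower)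
    then show "(INF \<psi>\<in>{\<psi>. test_fun \<Omega> \<psi> \<and> (LINT x:\<Omega>|lborel. \<bar>\<psi> x\<bar> powr r) = 1}.
       ereal (LINT x:\<Omega>|lborel. norm (grad \<psi> x) powr p)) \<le> ereal (Gp p \<Omega> \<psi> / Nr r \<psi> powr (p/r))"
      using g N_def by simp
  qed
next
  show "(INF \<psi>\<in>{\<psi>. test_fun \<Omega> \<psi> \<and> \<not>(AE x in lborel. \<psi> x = 0)}.
            ereal (Gp p \<Omega> \<psi> / Nr r \<psi> powr (p/r)))
     \<le> (INF \<psi>\<in>{\<psi>. test_fun \<Omega> \<psi> \<and> (LINT x:\<Omega>|lborel. \<bar>\<psi> x\<bar> powr r) = 1}.
       ereal (LINT x:\<Omega>|lborel. norm (grad \<psi> x) powr p))"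
  proof (rule INF_greatest)
    fix \<psi> assume "\<psi> \<in> {\<psi>. test_fun \<Omega> \<psi> \<and> (LINT x:\<Omega>|lborel. \<bar>\<psi> x\<bar> powr r) = 1}"
    then have t: "test_fun \<Omega> \<psi>" and n: "(LINT x:\<Omega>|lborel. \<bar>\<psi> x\<bar> powr r) = 1" by auto
    have N1: "Nr r \<psi> = 1" using n test_setint[OF t assms] Nr_def by metis
    then have "\<psi> \<in> {\<psi>. test_fun \<Omega> \<psi> \<and> \<not>(AE x in lborel. \<psi> x = 0)}"
      using t N_pos_iff[OF t assms] by simp
    then have "(INF \<psi>\<in>{\<psi>. test_fun \<Omega> \<psi> \<and> \<not>(AE x in lborel. \<psi> x = 0)}.
            ereal (Gp p \<Omega> \<psi> / Nr r \<psi> powr (p/r))) \<le> ereal (Gp p \<Omega> \<psi> / Nr r \<psi> powr (p/r))"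
      by (rule INF_lower)
    then show "(INF \<psi>\<in>{\<psi>. test_fun \<Omega> \<psi> \<and> \<not>(AE x in lborel. \<psi> x = 0)}.
            ereal (Gp p \<Omega> \<psi> / Nr r \<psi> powr (p/r))) \<le> ereal (LINT x:\<Omega>|lborel. norm (grad \<psi> x) powr p)"
      using N1 by (simp add: Gp_def)
  qed
qed

lemma interp:
  fixes f :: "'b \<Rightarrow> real"
  assumes i1: "integrable M (\<lambda>x. \<bar>f x\<bar> powr s)" and i2: "integrable M (\<lambda>x. \<bar>f x\<bar> powr t)"
    and i3: "integrable M (\<lambda>x. \<bar>f x\<bar> powr c)"
    and s: "s > 0" and t: "t > 0" and l: "0 < l" "l < 1" and c: "c = l * s + (1 - l) * t"
    and A: "A = (\<integral>x. \<bar>f x\<bar> powr s \<partial>M)" "A > 0"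
    and B: "B = (\<integral>x. \<bar>f x\<bar> powr t \<partial>M)" "B > 0"
  shows "(\<integral>x. \<bar>f x\<bar> powr c \<partial>M) \<le> A powr l * B powr (1 - l)"
proof -
  define D where "D = A powr l * B powr (1 - l)"
  have Dpos: "D > 0" using A B D_def by simp
  have pw: "\<bar>f x\<bar> powr c / D \<le> l * (\<bar>f x\<bar> powr s / A) + (1 - l) * (\<bar>f x\<bar> powr t / B)" for x
  proof (cases "f x = 0")
    case True
    then show ?thesis using c s t l by simp
  next
    case False
    have "(\<bar>f x\<bar> powr s / A) powr l * (\<bar>f x\<bar> powr t / B) powr (1 - l)
        \<le> l * (\<bar>f x\<bar> powr s / A) + (1 - l) * (\<bar>f x\<bar> powr t / B)"
      by (rule Youngs_inequality_0) (use l A B False in auto)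
    moreover have "(\<bar>f x\<bar> powr s / A) powr l * (\<bar>f x\<bar> powr t / B) powr (1 - l) = \<bar>f x\<bar> powr c / D"
      unfolding D_def c using A B
      by (simp add: powr_divide powr_powr powr_add mult.commute)
    ultimately show ?thesis by simp
  qed
  have "(\<integral>x. \<bar>f x\<bar> powr c / D \<partial>M) \<le> (\<integral>x. l * (\<bar>f x\<bar> powr s / A) + (1 - l) * (\<bar>f x\<bar> powr t / B) \<partial>M)"
    by (rule integral_mono) (use i1 i2 i3 pw in auto)
  also have "\<dots> = l * ((\<integral>x. \<bar>f x\<bar> powr s \<partial>M) / A) + (1 - l) * ((\<integral>x. \<bar>f x\<bar> powr t \<partial>M) / B)"
    using i1 i2 by simp
  also have "\<dots> = 1" using A B by simp
  finally have "(\<integral>x. \<bar>f x\<bar> powr c \<partial>M) / D \<le> 1" by simp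
  then show ?thesis using Dpos D_def by (simp add: divide_le_eq)
qed



lemma core_lower:
  fixes G N0 Nq Np a b q0 q p l :: real
  assumes q0: "0 < q0" "q0 < q" "q < p" and l: "l = (p-q)/(p-q0)"
    and pos: "N0 > 0" "Nq > 0" "Np > 0" "G \<ge> 0" "a > 0" "b \<ge> 0"
    and ha: "a \<le> G / N0 powr (p/q0)" and hb: "b \<le> G / Np"
    and hq: "Nq \<le> N0 powr l * Np powr (1-l)"
  shows "a powr (l*q0/q) * b powr (1 - l*q0/q) \<le> G / Nq powr (p/q)"
proof -
  define m where "m = l*q0/q"
  have pq0: "p - q0 > 0" using q0 by simp
  have l01: "0 < l" "l < 1" unfolding l using q0 pq0 by (auto simp: divide_less_eq)
  have qeq: "q = l*q0 + (1-l)*p" using q0 l by (simp add: field_simps)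
  have "l*q0 < q0" using l01 q0 by simp
  then have "l*q0 < q" using q0 by linarith
  then have m01: "0 < m" "m < 1" using l01 q0 by (auto simp: m_def field_simps)
  define X where "X = N0 powr (p/q0)"
  have Xpos: "X > 0" using pos X_def by simp
  have e1: "(N0 powr l * Np powr (1-l)) powr (p/q) = X powr m * Np powr (1-m)"
  proof -
    have "(N0 powr l * Np powr (1-l)) powr (p/q) = N0 powr (l*(p/q)) * Np powr ((1-l)*(p/q))"
      using pos by (simp add: powr_mult powr_powr)
    moreover have "l*(p/q) = (p/q0)*m" using q0 by (simp add: m_def field_simps)
    moreover have "(1-l)*(p/q) = 1-m"
    proof -
      have "(1-l)*p = q - l*q0" using qeq by simp
      then show ?thesis using q0 by (simp add: m_def field_simps)
    qed
    ultimately show ?thesis by (simp add: X_def powr_powr)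
  qed
  have h1: "Nq powr (p/q) \<le> X powr m * Np powr (1-m)"
    using e1 powr_mono2[of "p/q" Nq "N0 powr l * Np powr (1-l)"] hq pos q0 by simp
  have Ga: "a powr m \<le> (G/X) powr m" using powr_mono2[of m a "G/X"] m01 pos ha X_def by simp
  have Gb: "b powr (1-m) \<le> (G/Np) powr (1-m)" using powr_mono2[of "1-m" b "G/Np"] m01 pos hb by simp
  have "a powr m * b powr (1-m) \<le> (G/X) powr m * (G/Np) powr (1-m)"
    by (rule mult_mono) (use Ga Gb in auto)
  also have "\<dots> = (G powr m * G powr (1-m)) / (X powr m * Np powr (1-m))"
    using pos Xpos by (simp add: powr_divide)
  also have "G powr m * G powr (1-m) = G"
    using pos by (simp add: powr_add[symmetric])
  also have "G / (X powr m * Np powr (1-m)) \<le> G / Nq powr (p/q)"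
    by (rule divide_left_mono) (use h1 pos Xpos in auto)
  finally show ?thesis unfolding m_def .
qed

lemma core_upper:
  fixes Nq Np N2 l :: real
  assumes pos: "Nq > 0" "Np > 0" "N2 > 0" and l: "0 < l"
    and h: "Np \<le> Nq powr l * N2 powr (1 - l)"
  shows "(Np / N2 powr (1 - l)) powr (1/l) \<le> Nq"
proof -
  have "Np / N2 powr (1 - l) \<le> Nq powr l" using h pos by (simp add: divide_le_eq)
  then have "(Np / N2 powr (1 - l)) powr (1/l) \<le> (Nq powr l) powr (1/l)"
    by (rule powr_mono2[rotated 2]) (use pos l in auto)
  also have "\<dots> = Nq" using l pos by (simp add: powr_powr)
  finally show ?thesis .
qed

lemma e1: "(q0::real) < q \<Longrightarrow> q < p \<Longrightarrow> q = (p-q)/(p-q0) * q0 + (1 - (p-q)/(p-q0)) * p"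
proof -
  assume a: "q0 < q" "q < p"
  then have d: "p - q0 \<noteq> 0" by simp
  define l where "l = (p-q)/(p-q0)"
  have "l * (p - q0) = p - q" using d l_def by simp
  then have "l*p - l*q0 = p - q" by (simp add: algebra_simps)
  then have "q = l*q0 + (1-l)*p" by (simp add: algebra_simps)
  then show ?thesis using l_def by simp
qed
lemma e2: "0 < p \<Longrightarrow> (q::real) < p \<Longrightarrow> p = p / (2*p - q) * q + (1 - p / (2*p - q)) * (2 * p)"
proof -
  assume a: "0 < p" "q < p"
  then have d: "2*p - q \<noteq> 0" by simp
  define l where "l = p / (2*p - q)"
  have "l * (2*p - q) = p" using d l_def by simp
  then have "p = l*q + (1-l)*(2*p)" by (simp add: algebra_simps)
  then show ?thesis using l_def by simp
qed


theorem proposition2p3: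
  fixes \<Omega> :: "'a::euclidean_space set" and p q0 :: real
  assumes "1 < p" and "open \<Omega>"
    and "1 \<le> q0" and "q0 < p" and "q_admissible p q0 \<Omega>"
  shows "((\<lambda>q. lambda_pq p q \<Omega>) \<longlongrightarrow> lambda_pq p p \<Omega>) (at_left p)"
proof -
  define S where "S = {\<psi>. test_fun \<Omega> \<psi> \<and> \<not>(AE x in lborel. \<psi> x = 0)}"
  have L: "\<And>r. r > 0 \<Longrightarrow> lambda_pq p r \<Omega> = (INF \<psi>\<in>S. ereal (Gp p \<Omega> \<psi> / Nr r \<psi> powr (p/r)))"
    unfolding S_def by (rule lam_eq)
  have p0: "p > 0" and q00: "q0 > 0" using assms by auto
  have ev: "eventually (\<lambda>q. q0 < q \<and> q < p) (at_left p)"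
    using eventually_at_left_real[OF assms(4)] by (auto elim: eventually_mono)
  show ?thesis
  proof (cases "S = {}")
    case True
    then have inf: "\<And>r. r > 0 \<Longrightarrow> lambda_pq p r \<Omega> = \<infinity>" using L by (simp add: top_ereal_def)
    have "eventually (\<lambda>q. lambda_pq p q \<Omega> = lambda_pq p p \<Omega>) (at_left p)"
      using ev by (rule eventually_mono) (use inf q00 p0 in auto)
    then show ?thesis by (rule tendsto_eventually)
  next
    case False
    then obtain \<psi>0 where \<psi>0: "\<psi>0 \<in> S" by blast
    have St: "\<And>\<psi>. \<psi> \<in> S \<Longrightarrow> test_fun \<Omega> \<psi>" using S_def by blast
    have Sp: "\<And>\<psi> r. \<psi> \<in> S \<Longrightarrow> r > 0 \<Longrightarrow> Nr r \<psi> > 0"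
      using N_pos_iff S_def by blast
    have lowR: "\<And>\<psi> r. \<psi> \<in> S \<Longrightarrow> r > 0 \<Longrightarrow> lambda_pq p r \<Omega> \<le> ereal (Gp p \<Omega> \<psi> / Nr r \<psi> powr (p/r))"
      by (simp add: L) (erule INF_lower)
    have nonneg: "\<And>r. r > 0 \<Longrightarrow> 0 \<le> lambda_pq p r \<Omega>"
      using L by (simp add: INF_greatest G_nonneg N_nonneg)
    have fin: "\<And>r. r > 0 \<Longrightarrow> lambda_pq p r \<Omega> = ereal (real_of_ereal (lambda_pq p r \<Omega>))"
    proof -
      fix r :: real assume r: "r > 0"
      have "lambda_pq p r \<Omega> \<noteq> \<infinity>" using lowR[OF \<psi>0 r] by auto
      then show "lambda_pq p r \<Omega> = ereal (real_of_ereal (lambda_pq p r \<Omega>))"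
        using nonneg[OF r] by (simp add: ereal_real)
    qed
    define a where "a = real_of_ereal (lambda_pq p q0 \<Omega>)"
    define b where "b = real_of_ereal (lambda_pq p p \<Omega>)"
    have aE: "lambda_pq p q0 \<Omega> = ereal a" using fin[OF q00] a_def by simp
    have bE: "lambda_pq p p \<Omega> = ereal b" using fin[OF p0] b_def by simp
    have apos: "a > 0" using assms(5) aE unfolding q_admissible_def by simp
    have b0: "b \<ge> 0" using nonneg[OF p0] bE by simp
    have Ra: "\<And>\<psi>. \<psi> \<in> S \<Longrightarrow> a \<le> Gp p \<Omega> \<psi> / Nr q0 \<psi> powr (p/q0)"
      using lowR[OF _ q00] aE by simp
    have Rb: "\<And>\<psi>. \<psi> \<in> S \<Longrightarrow> b \<le> Gp p \<Omega> \<psi> / Nr p \<psi>"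
    proof -
      fix \<psi> assume "\<psi> \<in> S"
      then have "b \<le> Gp p \<Omega> \<psi> / Nr p \<psi> powr (p/p)" using lowR[OF _ p0] bE by simp
      then show "b \<le> Gp p \<Omega> \<psi> / Nr p \<psi>" using p0 N_nonneg[of p \<psi>] by simp
    qed
    define mu where "mu q = (p-q)/(p-q0) * q0 / q" for q
    have lowbound: "ereal (a powr mu q * b powr (1 - mu q)) \<le> lambda_pq p q \<Omega>" if q: "q0 < q" "q < p" for q
    proof -
      have qpos: "q > 0" using q q00 by simp
      show ?thesis unfolding L[OF qpos]
      proof (rule INF_greatest)
        fix \<psi> assume \<psi>: "\<psi> \<in> S"
        have "Nr q \<psi> \<le> Nr q0 \<psi> powr ((p-q)/(p-q0)) * Nr p \<psi> powr (1 - (p-q)/(p-q0))"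
          unfolding Nr_def
        proof (rule interp[OF test_int[OF St[OF \<psi>] q00] test_int[OF St[OF \<psi>] p0] test_int[OF St[OF \<psi>] qpos] q00 p0])
          show "0 < (p-q)/(p-q0)" using q by simp
          show "(p-q)/(p-q0) < 1" using q by (simp add: divide_less_eq)
          show "q = (p-q)/(p-q0) * q0 + (1 - (p-q)/(p-q0)) * p" using q by (rule e1)
          show "(LINT x|lborel. \<bar>\<psi> x\<bar> powr q0) = (LINT x|lborel. \<bar>\<psi> x\<bar> powr q0)" by simp
          show "(LINT x|lborel. \<bar>\<psi> x\<bar> powr q0) > 0" using Sp[OF \<psi> q00] unfolding Nr_def .
          show "(LINT x|lborel. \<bar>\<psi> x\<bar> powr p) = (LINT x|lborel. \<bar>\<psi> x\<bar> powr p)" by simp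
          show "(LINT x|lborel. \<bar>\<psi> x\<bar> powr p) > 0" using Sp[OF \<psi> p0] unfolding Nr_def .
        qed
        then have "a powr ((p-q)/(p-q0)*q0/q) * b powr (1 - (p-q)/(p-q0)*q0/q) \<le> Gp p \<Omega> \<psi> / Nr q \<psi> powr (p/q)"
          by (intro core_lower[OF q00 q refl Sp[OF \<psi> q00] Sp[OF \<psi> qpos] Sp[OF \<psi> p0] G_nonneg apos b0 Ra[OF \<psi>] Rb[OF \<psi>]])
        then show "ereal (a powr mu q * b powr (1 - mu q)) \<le> ereal (Gp p \<Omega> \<psi> / Nr q \<psi> powr (p/q))"
          by (simp add: mu_def)
      qed
    qed
    have mu_lim: "(mu \<longlongrightarrow> 0) (at_left p)"
    proof -
      have "((\<lambda>q. (p-q)/(p-q0) * q0 / q) \<longlongrightarrow> (p-p)/(p-q0) * q0 / p) (at_left p)"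
        by (intro tendsto_intros) (use p0 assms(4) in auto)
      then show ?thesis by (simp add: mu_def [abs_def])
    qed
    have lowlim: "((\<lambda>q. ereal (a powr mu q * b powr (1 - mu q))) \<longlongrightarrow> ereal b) (at_left p)"
    proof (cases "b = 0")
      case True
      then show ?thesis by simp
    next
      case False
      have "((\<lambda>q. a powr mu q * b powr (1 - mu q)) \<longlongrightarrow> a powr 0 * b powr (1 - 0)) (at_left p)"
        by (intro tendsto_intros mu_lim) (use apos False in auto)
      then show ?thesis using apos b0 by (simp add: tendsto_ereal)
    qed
    show ?thesis
    proof (rule order_tendstoI)
      fix y assume "y < lambda_pq p p \<Omega>"
      then have "eventually (\<lambda>q. y < ereal (a powr mu q * b powr (1 - mu q))) (at_left p)"
        using order_tendstoD(1)[OF lowlim] bE by simp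
      with ev show "eventually (\<lambda>q. y < lambda_pq p q \<Omega>) (at_left p)"
      proof eventually_elim
        case (elim q)
        then show ?case using lowbound[of q] by (meson less_le_trans)
      qed
    next
      fix y assume "lambda_pq p p \<Omega> < y"
      then obtain \<psi> where \<psi>: "\<psi> \<in> S" and y: "ereal (Gp p \<Omega> \<psi> / Nr p \<psi> powr (p/p)) < y"
        using L[OF p0] by (auto simp: INF_less_iff)
      define G where "G = Gp p \<Omega> \<psi>"
      define Np where "Np = Nr p \<psi>"
      define N2 where "N2 = Nr (2*p) \<psi>"
      have Np: "Np > 0" using Sp[OF \<psi> p0] Np_def by simp
      have N2: "N2 > 0" using Sp[OF \<psi>] p0 N2_def by simp
      define lq where "lq q = p / (2*p - q)" for q
      define u where "u q = G / ((Np / N2 powr (1 - lq q)) powr (1 / lq q)) powr (p/q)" for q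
      have ulim: "(u \<longlongrightarrow> G / ((Np / N2 powr (1 - lq p)) powr (1 / lq p)) powr (p/p)) (at_left p)"
        unfolding u_def lq_def
        by (intro tendsto_intros) (use p0 Np N2 in auto)
      moreover have "G / ((Np / N2 powr (1 - lq p)) powr (1 / lq p)) powr (p/p) = Gp p \<Omega> \<psi> / Nr p \<psi> powr (p/p)"
        using p0 Np N2 by (simp add: lq_def G_def Np_def)
      ultimately have "((\<lambda>q. ereal (u q)) \<longlongrightarrow> ereal (Gp p \<Omega> \<psi> / Nr p \<psi> powr (p/p))) (at_left p)"
        by (simp add: tendsto_ereal)
      then have "eventually (\<lambda>q. ereal (u q) < y) (at_left p)"
        using y by (rule order_tendstoD(2))
      with ev show "eventually (\<lambda>q. lambda_pq p q \<Omega> < y) (at_left p)"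
      proof eventually_elim
        case (elim q)
        then have q: "q0 < q" "q < p" and uy: "ereal (u q) < y" by auto
        have qpos: "q > 0" using q q00 by simp
        have l0: "0 < lq q" "lq q < 1" using q p0 by (auto simp: lq_def divide_less_eq)
        have "Np \<le> Nr q \<psi> powr (lq q) * N2 powr (1 - lq q)"
          unfolding Np_def N2_def Nr_def
        proof (rule interp[OF test_int[OF St[OF \<psi>] qpos] test_int[OF St[OF \<psi>], of "2*p"] test_int[OF St[OF \<psi>] p0] qpos])
          show "0 < 2*p" using p0 by simp
          show "0 < 2*p" using p0 by simp
          show "0 < lq q" "lq q < 1" by (rule l0)+
          show "p = lq q * q + (1 - lq q) * (2 * p)" unfolding lq_def using p0 q(2) by (rule e2)
          show "(LINT x|lborel. \<bar>\<psi> x\<bar> powr q) = (LINT x|lborel. \<bar>\<psi> x\<bar> powr q)" by simp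
          show "(LINT x|lborel. \<bar>\<psi> x\<bar> powr q) > 0" using Sp[OF \<psi> qpos] unfolding Nr_def .
          show "(LINT x|lborel. \<bar>\<psi> x\<bar> powr (2*p)) = (LINT x|lborel. \<bar>\<psi> x\<bar> powr (2*p))" by simp
          show "(LINT x|lborel. \<bar>\<psi> x\<bar> powr (2*p)) > 0" using N2 unfolding N2_def Nr_def .
        qed
        then have lb: "(Np / N2 powr (1 - lq q)) powr (1 / lq q) \<le> Nr q \<psi>"
          by (intro core_upper[OF Sp[OF \<psi> qpos] Np N2 l0(1)])
        have lpos: "(Np / N2 powr (1 - lq q)) powr (1 / lq q) > 0" using Np N2 by simp
        have "G / Nr q \<psi> powr (p/q) \<le> u q"
          unfolding u_def
        proof (rule divide_left_mono)
          show "((Np / N2 powr (1 - lq q)) powr (1 / lq q)) powr (p/q) \<le> Nr q \<psi> powr (p/q)"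
            by (rule powr_mono2) (use lb lpos p0 qpos in auto)
          show "0 \<le> G" using G_def G_nonneg by simp
          show "0 < Nr q \<psi> powr (p / q) * ((Np / N2 powr (1 - lq q)) powr (1 / lq q)) powr (p / q)"
            using lpos Sp[OF \<psi> qpos] by simp
        qed
        then have "lambda_pq p q \<Omega> \<le> ereal (u q)"
          using lowR[OF \<psi> qpos] G_def by (meson ereal_less_eq(3) order_trans)
        then show ?case using uy by (meson le_less_trans)
      qed
    qed
  qed
qed

end
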